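(* Let $\mathcal{X}$ be a finite set of $n$ items and consider the (full-rank) context dependent random utility model (CDM) on $\mathcal{X}$ with parameter vector $u=(u_{xz})_{x\neq z}\in\mathbb{R}^{n(n-1)}$. Let $\mathcal{C}_{\mathcal{D}}$ be the collection of distinct choice sets appearing in a dataset $\mathcal{D}$. Suppose there are two distinct sizes $k\neq k'$ with $2\le k,k'\le n$, at least one of which is not in $\{2,n\}$, such that $\mathcal{C}_{\mathcal{D}}$ contains every subset of $\mathcal{X}$ of size $k$ and every subset of $\mathcal{X}$ of size $k'$. Then the CDM is identifiable from $\mathcal{D}$: if $u,u'\in\mathbb{R}^{n(n-1)}$ satisfy $P_u(x\mid C)=P_{u'}(x\mid C)$ for all $C\in\mathcal{C}_{\mathcal{D}}$ and all $x\in C$, then $u'-u=\alpha\mathbf{1}$ for some $\alpha\in\mathbb{R}$.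
   Context: A CDM on a finite universe $\mathcal{X}$ of $n$ items has one real parameter $u_{xz}$ for each ordered pair of distinct items $x\neq z$; collect them into $u\in\mathbb{R}^{n(n-1)}$. For a choice set $C\subseteq\mathcal{X}$ with $|C|\ge 2$ and $x\in C$, the probability of choosing $x$ from $C$ is $P_u(x\mid C)=\dfrac{\exp\big(\sum_{z\in C\setminus\{x\}}u_{xz}\big)}{\sum_{y\in C}\exp\big(\sum_{z\in C\setminus\{y\}}u_{yz}\big)}$. Adding the same constant to every $u_{xz}$ does not change any choice probability, so identifiability is understood up to such a shift. A dataset $\mathcal{D}$ is a finite list of pairs $(x_j,C_j)$ with $x_j\in C_j\subseteq\mathcal{X}$, $|C_j|\ge 2$ (item $x_j$ chosen from set $C_j$); $\mathcal{C}_{\mathcal{D}}$ denotes the collection of distinct sets $C_j$ occurring in $\mathcal{D}$. $\mathbf{1}$ is the all-ones vector. *)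

theory Defs
  imports Complex_Main
begin

text \<open>CDM parameters: u x z is u_{xz}; only values for distinct x, z in the universe matter.\<close>

definition cdm_prob :: "('a \<Rightarrow> 'a \<Rightarrow> real) \<Rightarrow> 'a \<Rightarrow> 'a set \<Rightarrow> real" where
  "cdm_prob u x C =
     exp (\<Sum>z\<in>C - {x}. u x z) / (\<Sum>y\<in>C. exp (\<Sum>z\<in>C - {y}. u y z))"

definition valid_dataset :: "'a set \<Rightarrow> ('a \<times> 'a set) list \<Rightarrow> bool" where
  "valid_dataset X D \<longleftrightarrow> (\<forall>(x, C)\<in>set D. x \<in> C \<and> C \<subseteq> X \<and> card C \<ge> 2)"

definition choice_sets :: "('a \<times> 'a set) list \<Rightarrow> 'a set set" where
  "choice_sets D = snd ` set D"

end

theory Submission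
  imports Defs
begin

lemma key_eq:
  fixes u u' :: "'a \<Rightarrow> 'a \<Rightarrow> real"
  assumes fin: "finite C" and xC: "x \<in> C" and yC: "y \<in> C"
    and px: "cdm_prob u x C = cdm_prob u' x C" and py: "cdm_prob u y C = cdm_prob u' y C"
  shows "(\<Sum>z\<in>C - {x}. u' x z - u x z) = (\<Sum>z\<in>C - {y}. u' y z - u y z)"
proof -
  define a :: "('a \<Rightarrow> 'a \<Rightarrow> real) \<Rightarrow> 'a \<Rightarrow> real" where "a = (\<lambda>v t. \<Sum>z\<in>C - {t}. v t z)"
  define Z where "Z = (\<lambda>v. \<Sum>t\<in>C. exp (a v t))"
  have Zpos: "Z v > 0" for v :: "'a \<Rightarrow> 'a \<Rightarrow> real"
    unfolding Z_def using fin xC by (intro sum_pos) auto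
  have cp: "cdm_prob v t C = exp (a v t) / Z v" for v t
    unfolding cdm_prob_def a_def Z_def by simp
  have r: "cdm_prob v x C / cdm_prob v y C = exp (a v x - a v y)" for v
    using Zpos[of v] by (simp add: cp exp_diff)
  have "exp (a u x - a u y) = exp (a u' x - a u' y)"
    using r[of u] r[of u'] px py by simp
  hence "a u x - a u y = a u' x - a u' y" by simp
  thus ?thesis unfolding a_def by (simp add: sum_subtractf)
qed

lemma lemA:
  fixes w :: "'a \<Rightarrow> 'a \<Rightarrow> real"
  assumes finX: "finite X" and k3: "3 \<le> k" and kn: "k + 1 \<le> card X"
    and H: "\<And>C x y. C \<subseteq> X \<Longrightarrow> card C = k \<Longrightarrow> x \<in> C \<Longrightarrow> y \<in> C \<Longrightarrow>
             (\<Sum>z\<in>C - {x}. w x z) = (\<Sum>z\<in>C - {y}. w y z)"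
    and xa: "x \<noteq> a" and zz: "z \<noteq> z'" and d: "x \<noteq> z" "x \<noteq> z'" "a \<noteq> z" "a \<noteq> z'"
    and inX: "x \<in> X" "a \<in> X" "z \<in> X" "z' \<in> X"
  shows "w x z - w x z' = w a z - w a z'"
proof -
  have c4: "card {x,a,z,z'} = 4" using xa zz d by auto
  have "card (X - {x,a,z,z'}) = card X - 4"
    using c4 inX finX by (subst card_Diff_subset) auto
  hence "k - 3 \<le> card (X - {x,a,z,z'})" using kn k3 by simp
  then obtain A0 where A0: "A0 \<subseteq> X - {x,a,z,z'}" "card A0 = k - 3"
    using obtain_subset_with_card_n by metis
  have finA0: "finite A0" using A0(1) finX finite_subset by blast
  have nA0: "x \<notin> A0" "a \<notin> A0" "z \<notin> A0" "z' \<notin> A0" using A0(1) by auto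
  define A where "A = insert a A0"
  define C1 where "C1 = insert x (insert z A)"
  define C2 where "C2 = insert x (insert z' A)"
  have cA: "card A = k - 2" using A_def finA0 nA0 A0(2) k3 by simp
  have c1: "card C1 = k" unfolding C1_def A_def using finA0 nA0 A0(2) k3 xa d zz by simp
  have c2: "card C2 = k" unfolding C2_def A_def using finA0 nA0 A0(2) k3 xa d zz by simp
  have s1: "C1 \<subseteq> X" "C2 \<subseteq> X" unfolding C1_def C2_def A_def using A0(1) inX by auto
  have e1: "(\<Sum>t\<in>C1 - {x}. w x t) = (\<Sum>t\<in>C1 - {a}. w a t)"
    by (rule H[OF s1(1) c1]) (auto simp: C1_def A_def)
  have e2: "(\<Sum>t\<in>C2 - {x}. w x t) = (\<Sum>t\<in>C2 - {a}. w a t)"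
    by (rule H[OF s1(2) c2]) (auto simp: C2_def A_def)
  have q1: "C1 - {x} = insert z (insert a A0)" "C1 - {a} = insert x (insert z A0)"
    unfolding C1_def A_def using nA0 xa d by auto
  have q2: "C2 - {x} = insert z' (insert a A0)" "C2 - {a} = insert x (insert z' A0)"
    unfolding C2_def A_def using nA0 xa d by auto
  have "w x z + w x a + (\<Sum>t\<in>A0. w x t) = w a x + w a z + (\<Sum>t\<in>A0. w a t)"
    using e1 unfolding q1 using finA0 nA0 xa d by simp
  moreover have "w x z' + w x a + (\<Sum>t\<in>A0. w x t) = w a x + w a z' + (\<Sum>t\<in>A0. w a t)"
    using e2 unfolding q2 using finA0 nA0 xa d by simp
  ultimately show ?thesis by linarith
qed

lemma lemB:
  fixes w :: "'a \<Rightarrow> 'a \<Rightarrow> real"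
  assumes finX: "finite X" and k3: "3 \<le> k" and kn: "k + 1 \<le> card X"
    and H: "\<And>C x y. C \<subseteq> X \<Longrightarrow> card C = k \<Longrightarrow> x \<in> C \<Longrightarrow> y \<in> C \<Longrightarrow>
             (\<Sum>z\<in>C - {x}. w x z) = (\<Sum>z\<in>C - {y}. w y z)"
    and m2: "2 \<le> m" and mn: "m \<le> card X"
    and Hm: "\<And>C x y. C \<subseteq> X \<Longrightarrow> card C = m \<Longrightarrow> x \<in> C \<Longrightarrow> y \<in> C \<Longrightarrow>
             (\<Sum>z\<in>C - {x}. w x z) = (\<Sum>z\<in>C - {y}. w y z)"
    and xy: "x \<noteq> y" and inX: "x \<in> X" "y \<in> X"
    and z0: "z0 \<in> X" "z0 \<noteq> x" "z0 \<noteq> y"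
  shows "w x y - w y x + real (m - 2) * (w x z0 - w y z0) = 0"
proof -
  have "card (X - {x,y}) = card X - 2"
    using inX xy finX by (subst card_Diff_subset) auto
  hence "m - 2 \<le> card (X - {x,y})" using mn by simp
  then obtain B where B: "B \<subseteq> X - {x,y}" "card B = m - 2"
    using obtain_subset_with_card_n by metis
  have finB: "finite B" using B(1) finX finite_subset by blast
  have nB: "x \<notin> B" "y \<notin> B" using B(1) by auto
  define C where "C = insert x (insert y B)"
  have cC: "card C = m" unfolding C_def using finB nB B(2) xy m2 by simp
  have sC: "C \<subseteq> X" unfolding C_def using B(1) inX by auto
  have e: "(\<Sum>t\<in>C - {x}. w x t) = (\<Sum>t\<in>C - {y}. w y t)"
    by (rule Hm[OF sC cC]) (auto simp: C_def)
  have q: "C - {x} = insert y B" "C - {y} = insert x B"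
    unfolding C_def using nB xy by auto
  have e2: "w x y + (\<Sum>t\<in>B. w x t) = w y x + (\<Sum>t\<in>B. w y t)"
    using e unfolding q using finB nB by simp
  have each: "w x t - w y t = w x z0 - w y z0" if "t \<in> B" for t
  proof (cases "t = z0")
    case True thus ?thesis by simp
  next
    case False
    have "t \<in> X" "t \<noteq> x" "t \<noteq> y" using that B(1) by auto
    from lemA[OF finX k3 kn H xy False] this z0 inX
    show ?thesis by auto
  qed
  have "(\<Sum>t\<in>B. w x t) - (\<Sum>t\<in>B. w y t) = (\<Sum>t\<in>B. w x z0 - w y z0)"
    by (simp add: sum_subtractf[symmetric] each)
  also have "\<dots> = real (m - 2) * (w x z0 - w y z0)" using B(2) by simp
  finally show ?thesis using e2 by linarith
qed

lemma main:
  fixes w :: "'a \<Rightarrow> 'a \<Rightarrow> real"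
  assumes finX: "finite X" and k3: "3 \<le> k" and kn: "k + 1 \<le> card X"
    and H: "\<And>C x y. C \<subseteq> X \<Longrightarrow> card C = k \<Longrightarrow> x \<in> C \<Longrightarrow> y \<in> C \<Longrightarrow>
             (\<Sum>z\<in>C - {x}. w x z) = (\<Sum>z\<in>C - {y}. w y z)"
    and m2: "2 \<le> m" and mn: "m \<le> card X" and mk: "m \<noteq> k"
    and Hm: "\<And>C x y. C \<subseteq> X \<Longrightarrow> card C = m \<Longrightarrow> x \<in> C \<Longrightarrow> y \<in> C \<Longrightarrow>
             (\<Sum>z\<in>C - {x}. w x z) = (\<Sum>z\<in>C - {y}. w y z)"
  shows "\<exists>\<alpha>::real. \<forall>x\<in>X. \<forall>z\<in>X. x \<noteq> z \<longrightarrow> w x z = \<alpha>"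
proof -
  have both: "w x y = w y x \<and> w x z0 = w y z0"
    if xy: "x \<noteq> y" and inX: "x \<in> X" "y \<in> X"
      and z0: "z0 \<in> X" "z0 \<noteq> x" "z0 \<noteq> y" for x y z0
  proof -
    have a1: "w x y - w y x + real (m - 2) * (w x z0 - w y z0) = 0"
      by (rule lemB[OF finX k3 kn H m2 mn Hm xy inX z0])
    have a2: "w x y - w y x + real (k - 2) * (w x z0 - w y z0) = 0"
      using lemB[OF finX k3 kn H _ _ H xy inX z0] k3 kn by simp
    have "(real (m - 2) - real (k - 2)) * (w x z0 - w y z0) = 0"
      using a1 a2 by (simp add: algebra_simps)
    moreover have "real (m - 2) \<noteq> real (k - 2)" using mk m2 k3 by simp
    ultimately have "w x z0 = w y z0" by simp
    with a1 show ?thesis by simp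
  qed
  have third: "\<exists>z0\<in>X. z0 \<noteq> x \<and> z0 \<noteq> y" for x y
  proof -
    have "card X - card {x,y} \<le> card (X - {x,y})" by (rule diff_card_le_card_Diff) simp
    moreover have "card {x,y} \<le> 2" by (cases "x = y") auto
    ultimately have "card (X - {x,y}) \<ge> card X - 2" by linarith
    moreover have "card X - 2 > 0" using kn k3 by linarith
    ultimately have "card (X - {x,y}) \<noteq> 0" by linarith
    hence "X - {x,y} \<noteq> {}" by force
    thus ?thesis by auto
  qed
  have sym: "w x y = w y x" if "x \<noteq> y" "x \<in> X" "y \<in> X" for x y
    using third[of x y] both that by blast
  have col: "w x z = w y z" if "x \<noteq> z" "y \<noteq> z" "x \<in> X" "y \<in> X" "z \<in> X" for x y z
  proof (cases "x = y")
    case False thus ?thesis using both[of x y z] that by auto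
  qed simp
  have "X \<noteq> {}" using kn k3 by auto
  then obtain p where p: "p \<in> X" by blast
  then obtain q where "q \<in> X" "q \<noteq> p" using third[of p p] by blast
  hence pq: "p \<in> X" "q \<in> X" "p \<noteq> q" using p by auto
  have "w x z = w p q" if "x \<in> X" "z \<in> X" "x \<noteq> z" for x z
  proof (cases "z = q")
    case True thus ?thesis using col[of x q p] that pq by auto
  next
    case False
    have "w x z = w q z" using col[of x z q] that pq False by auto
    also have "\<dots> = w z q" using sym[of q z] that pq False by auto
    also have "\<dots> = w p q" using col[of z q p] that pq False by auto
    finally show ?thesis .
  qed
  thus ?thesis by blast
qed

theorem theorem1:
  fixes X :: "'a set" and D :: "('a \<times> 'a set) list"
    and u u' :: "'a \<Rightarrow> 'a \<Rightarrow> real" and k k' :: nat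
  assumes "finite X"
    and "valid_dataset X D"
    and "k \<noteq> k'" and "2 \<le> k" and "k \<le> card X" and "2 \<le> k'" and "k' \<le> card X"
    and "k \<notin> {2, card X} \<or> k' \<notin> {2, card X}"
    and "\<forall>C. C \<subseteq> X \<and> card C = k \<longrightarrow> C \<in> choice_sets D"
    and "\<forall>C. C \<subseteq> X \<and> card C = k' \<longrightarrow> C \<in> choice_sets D"
    and "\<forall>C\<in>choice_sets D. \<forall>x\<in>C. cdm_prob u x C = cdm_prob u' x C"
  shows "\<exists>\<alpha>::real. \<forall>x\<in>X. \<forall>z\<in>X. x \<noteq> z \<longrightarrow> u' x z - u x z = \<alpha>"
proof -
  define w where "w = (\<lambda>x z. u' x z - u x z)"
  have Hg: "(\<Sum>z\<in>C - {x}. w x z) = (\<Sum>z\<in>C - {y}. w y z)"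
    if "C \<subseteq> X" "card C = m" "m = k \<or> m = k'" "x \<in> C" "y \<in> C" for C m x y
  proof -
    have fin: "finite C" using that(1) assms(1) finite_subset by blast
    have "C \<in> choice_sets D" using that assms(9,10) by blast
    hence "cdm_prob u x C = cdm_prob u' x C" "cdm_prob u y C = cdm_prob u' y C"
      using assms(11) that by auto
    from key_eq[OF fin that(4,5) this] show ?thesis unfolding w_def .
  qed
  have Hk: "\<And>C x y. C \<subseteq> X \<Longrightarrow> card C = k \<Longrightarrow> x \<in> C \<Longrightarrow> y \<in> C \<Longrightarrow>
             (\<Sum>z\<in>C - {x}. w x z) = (\<Sum>z\<in>C - {y}. w y z)" using Hg by blast
  have Hk': "\<And>C x y. C \<subseteq> X \<Longrightarrow> card C = k' \<Longrightarrow> x \<in> C \<Longrightarrow> y \<in> C \<Longrightarrow>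
             (\<Sum>z\<in>C - {x}. w x z) = (\<Sum>z\<in>C - {y}. w y z)" using Hg by blast
  from assms(8) have "\<exists>\<alpha>::real. \<forall>x\<in>X. \<forall>z\<in>X. x \<noteq> z \<longrightarrow> w x z = \<alpha>"
  proof
    assume "k \<notin> {2, card X}"
    hence kk: "3 \<le> k" "k + 1 \<le> card X" using assms(4,5) by auto
    show ?thesis using assms(3) by (intro main[OF assms(1) kk Hk assms(6,7) _ Hk']) auto
  next
    assume "k' \<notin> {2, card X}"
    hence kk: "3 \<le> k'" "k' + 1 \<le> card X" using assms(6,7) by auto
    show ?thesis using assms(3) by (intro main[OF assms(1) kk Hk' assms(4,5) _ Hk]) auto
  qed
  thus ?thesis unfolding w_def .
qed

end
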